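(* Let $n\ge 2$, $m=qn$ with $q$ a positive integer, and assume $m\ge N:=67584n^3\log^2 m+25216n^4\log m+2354n^5+128n^2\log m+24n^3+3n^2+n$. Let $\pi_1,\dots,\pi_n$ be independent uniformly random orderings of the items and run Give-Away Round-Robin. Then for every agent $i$, $$\Pr\Big[\bigcup_{k<32\log m+4n}\ \bigcup_{j\ne i}\mathcal{E}^{ij}_k\Big]\le \frac{2048n^2\log^2 m+640n^3\log m+50n^4}{m}.$$
   Context: Logarithms are natural. Give-Away Round-Robin: Phase 1: for $i=1,\dots,n$ in order, and for each $j\ne i$ in increasing order, agent $i$ gives agent $j$ the unallocated item ranked lowest in $\pi_i$. Phase 2: Round-Robin on the remaining items: agents take turns in order $1,\dots,n,1,\dots,n,\dots$, on her turn agent $i$ takes the unallocated item ranked highest in $\pi_i$, until all items are allocated; final bundles $A_1,\dots,A_n$ each have $q$ items. $g\succ_i g'$ means $g$ is ranked above $g'$ in $\pi_i$; $b_{jk}$ is the $k$-th best item of $A_j$ according to $\pi_i$; $\mathcal{E}^{ij}_k$ is the event $b_{jk}\succ_i b_{ik}$ (defined for all $j\ne i$). *)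

theory Defs
  imports "HOL-Probability.Probability" "HOL-Combinatorics.Multiset_Permutations"
begin

(* Agents are 0..<n (agent 1 of the paper is agent 0 here), items are 0..<m.
   A ranking (ordering) pi_i of the items is a list of all items without
   repetition, best item first. *)

definition ranked_above :: "nat list \<Rightarrow> nat \<Rightarrow> nat \<Rightarrow> bool" where
  "ranked_above p g g' \<longleftrightarrow> (\<exists>a b. a < b \<and> b < length p \<and> p ! a = g \<and> p ! b = g')"

definition best_in :: "nat list \<Rightarrow> nat set \<Rightarrow> nat" where
  "best_in p U = hd (filter (\<lambda>g. g \<in> U) p)"

definition worst_in :: "nat list \<Rightarrow> nat set \<Rightarrow> nat" where
  "worst_in p U = last (filter (\<lambda>g. g \<in> U) p)"

(* state: (unallocated items, bundles) *)
type_synonym state = "nat set \<times> (nat \<Rightarrow> nat set)"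

definition give_step :: "(nat \<Rightarrow> nat list) \<Rightarrow> nat \<times> nat \<Rightarrow> state \<Rightarrow> state" where
  "give_step ps ij st = (let (i, j) = ij; (U, A) = st; g = worst_in (ps i) U
                         in (U - {g}, A(j := insert g (A j))))"

definition phase1 :: "nat \<Rightarrow> nat \<Rightarrow> (nat \<Rightarrow> nat list) \<Rightarrow> state" where
  "phase1 n m ps = fold (give_step ps) [(i, j). i \<leftarrow> [0..<n], j \<leftarrow> [0..<n], j \<noteq> i]
                      ({0..<m}, (\<lambda>_. {}))"

definition rr_step :: "nat \<Rightarrow> (nat \<Rightarrow> nat list) \<Rightarrow> nat \<Rightarrow> state \<Rightarrow> state" where
  "rr_step n ps t st = (let (U, A) = st; i = t mod n; g = best_in (ps i) U
                        in (U - {g}, A(i := insert g (A i))))"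

definition phase2 :: "nat \<Rightarrow> (nat \<Rightarrow> nat list) \<Rightarrow> state \<Rightarrow> state" where
  "phase2 n ps st = fold (rr_step n ps) [0..<card (fst st)] st"

definition garr :: "nat \<Rightarrow> nat \<Rightarrow> (nat \<Rightarrow> nat list) \<Rightarrow> nat \<Rightarrow> nat set" where
  "garr n m ps = snd (phase2 n ps (phase1 n m ps))"

(* b_{jk}: the k-th best (k >= 1) item of A_j according to pi_i *)
definition kth_best :: "nat \<Rightarrow> nat \<Rightarrow> (nat \<Rightarrow> nat list) \<Rightarrow> nat \<Rightarrow> nat \<Rightarrow> nat \<Rightarrow> nat" where
  "kth_best n m ps i j k = filter (\<lambda>g. g \<in> garr n m ps j) (ps i) ! (k - 1)"

definition event_E :: "nat \<Rightarrow> nat \<Rightarrow> (nat \<Rightarrow> nat list) \<Rightarrow> nat \<Rightarrow> nat \<Rightarrow> nat \<Rightarrow> bool" where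
  "event_E n m ps i j k \<longleftrightarrow> ranked_above (ps i) (kth_best n m ps i j k) (kth_best n m ps i i k)"

definition orderings :: "nat \<Rightarrow> nat \<Rightarrow> (nat \<Rightarrow> nat list) set" where
  "orderings n m = PiE {0..<n} (\<lambda>_. permutations_of_set {0..<m})"

definition orderings_pmf :: "nat \<Rightarrow> nat \<Rightarrow> (nat \<Rightarrow> nat list) pmf" where
  "orderings_pmf n m = pmf_of_set (orderings n m)"

end

theory Submission
  imports Defs
begin


lemma best_in_props:
  "distinct p \<Longrightarrow> U \<inter> set p \<noteq> {} \<Longrightarrow>
   \<exists>idx<length p. p!idx = best_in p U \<and> best_in p U \<in> U \<and> (\<forall>b<idx. p!b \<notin> U)"
proof (induction p)
  case Nil then show ?case by simp
next
  case (Cons x xs)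
  show ?case
  proof (cases "x \<in> U")
    case True
    then show ?thesis by (auto simp: best_in_def)
  next
    case False
    then have "U \<inter> set xs \<noteq> {}" using Cons.prems by auto
    with Cons obtain idx where "idx < length xs" "xs!idx = best_in xs U" "best_in xs U \<in> U"
      "\<forall>b<idx. xs!b \<notin> U" by auto
    moreover have "best_in (x#xs) U = best_in xs U" using False by (simp add: best_in_def)
    ultimately show ?thesis using False
      by (intro exI[of _ "Suc idx"]) (auto simp: less_Suc_eq_0_disj)
  qed
qed

lemma worst_in_props:
  "distinct p \<Longrightarrow> U \<inter> set p \<noteq> {} \<Longrightarrow>
   \<exists>idx<length p. p!idx = worst_in p U \<and> worst_in p U \<in> U \<and> (\<forall>b. idx < b \<and> b < length p \<longrightarrow> p!b \<notin> U)"
proof (induction p rule: rev_induct)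
  case Nil then show ?case by simp
next
  case (snoc x xs)
  show ?case
  proof (cases "x \<in> U")
    case True
    then show ?thesis by (intro exI[of _ "length xs"]) (auto simp: worst_in_def)
  next
    case False
    then have "U \<inter> set xs \<noteq> {}" using snoc.prems by auto
    with snoc obtain idx where "idx < length xs" "xs!idx = worst_in xs U" "worst_in xs U \<in> U"
      "\<forall>b. idx < b \<and> b < length xs \<longrightarrow> xs!b \<notin> U" by auto
    moreover have "worst_in (xs@[x]) U = worst_in xs U" using False by (simp add: worst_in_def)
    ultimately show ?thesis using False
      apply (intro exI[of _ idx])
      by (auto simp: nth_append less_Suc_eq)

  qed
qed

lemma best_pos:
  assumes "distinct p" "U \<inter> set p \<noteq> {}"
  shows "\<exists>idx<length p. p!idx = best_in p U \<and> best_in p U \<in> U \<and> idx \<le> card (set p - U)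
          \<and> (\<forall>b<idx. p!b \<notin> U)"
proof -
  obtain idx where h: "idx<length p" "p!idx = best_in p U" "best_in p U \<in> U" "\<forall>b<idx. p!b \<notin> U"
    using best_in_props[OF assms] by blast
  have "(\<lambda>b. p!b) ` {..<idx} \<subseteq> set p - U" using h by auto
  moreover have "inj_on (\<lambda>b. p!b) {..<idx}" using assms(1) h(1)
    by (auto simp: inj_on_def nth_eq_iff_index_eq)
  ultimately have "card {..<idx} \<le> card (set p - U)"
    by (metis card_image card_mono finite_Diff finite_set)
  then show ?thesis using h by auto
qed

lemma worst_pos:
  assumes "distinct p" "U \<inter> set p \<noteq> {}"
  shows "\<exists>idx<length p. p!idx = worst_in p U \<and> worst_in p U \<in> U \<and> length p \<le> Suc idx + card (set p - U)
         \<and> (\<forall>b. idx < b \<and> b < length p \<longrightarrow> p!b \<notin> U)"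
proof -
  obtain idx where h: "idx<length p" "p!idx = worst_in p U" "worst_in p U \<in> U"
    "\<forall>b. idx < b \<and> b < length p \<longrightarrow> p!b \<notin> U"
    using worst_in_props[OF assms] by blast
  have "(\<lambda>b. p!b) ` {idx<..<length p} \<subseteq> set p - U" using h by auto
  moreover have "inj_on (\<lambda>b. p!b) {idx<..<length p}" using assms(1) h(1)
    by (auto simp: inj_on_def nth_eq_iff_index_eq)
  ultimately have "card {idx<..<length p} \<le> card (set p - U)"
    by (metis card_image card_mono finite_Diff finite_set)
  then show ?thesis using h by auto
qed



lemma len_inner: "length (concat (map (\<lambda>j. if P j then [g j] else []) xs)) \<le> length xs"
  by (induction xs) auto

lemma len_outer: "(\<forall>x\<in>set xs. length (f x) \<le> k) \<Longrightarrow> length (concat (map f xs)) \<le> length xs * k"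
  by (induction xs) auto

lemma len_L1: "length [(i, j). i \<leftarrow> [0..<n], j \<leftarrow> [0..<n], j \<noteq> i] \<le> n*n"
proof -
  have "length (concat (map (\<lambda>i. concat (map (\<lambda>j. if j \<noteq> i then [(i, j)] else []) [0..<n])) [0..<n]))
     \<le> length [0..<n] * n"
  proof (rule len_outer, rule ballI)
    fix x show "length (concat (map (\<lambda>j. if j \<noteq> x then [(x, j)] else []) [0..<n])) \<le> n"
      using len_inner[of "\<lambda>j. j \<noteq> x" "\<lambda>j. (x,j)" "[0..<n]"] by simp
  qed
  then show ?thesis by simp
qed

lemma set_L1: "(l, j) \<in> set [(i, j). i \<leftarrow> [0..<n], j \<leftarrow> [0..<n], j \<noteq> i] \<Longrightarrow> l < n"
  by auto

definition Dset :: "nat \<Rightarrow> nat \<Rightarrow> nat \<Rightarrow> nat list \<Rightarrow> nat set" where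
  "Dset n R m p = (set (take (n*n + n*R) p) \<union> set (drop (m - n*n) p)) \<inter> {..<m}"

locale det =
  fixes n m i R :: nat and ps :: "nat \<Rightarrow> nat list"
  assumes perm: "\<And>l. l < n \<Longrightarrow> distinct (ps l) \<and> set (ps l) = {0..<m}"
  and i: "i < n" and mbig: "n*n + n*R \<le> m"
  and good: "\<And>l r. l < n \<Longrightarrow> l \<noteq> i \<Longrightarrow> r < R \<Longrightarrow> ps i ! r \<notin> Dset n R m (ps l)"
begin

definition S where "S = set (take R (ps i))"

lemma len: "l < n \<Longrightarrow> length (ps l) = m"
proof -
  assume l: "l < n"
  have "card (set (ps l)) = length (ps l)" using perm[OF l] distinct_card by blast
  moreover have "card (set (ps l)) = m" using perm[OF l] by simp
  ultimately show ?thesis by simp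
qed

lemma S_sub: "S \<subseteq> {0..<m}" unfolding S_def using perm[OF i] by (metis set_take_subset)

lemma cardS: "card S = R"
proof -
  have "distinct (take R (ps i))" using perm[OF i] by simp
  moreover have "R \<le> n*R" using i by simp
  then have "R \<le> m" using mbig by linarith
  ultimately show ?thesis unfolding S_def using len[OF i] mbig
    by (simp add: distinct_card)
qed

lemma Rm: "R \<le> m"
proof -
  have "R \<le> n*R" using i by simp
  then show ?thesis using mbig by linarith
qed

lemma inS: "x \<in> S \<longleftrightarrow> (\<exists>r<R. x = ps i ! r)"
proof -
  have l: "length (take R (ps i)) = R" using len[OF i] Rm by simp
  show ?thesis unfolding S_def in_set_conv_nth l using Rm len[OF i] by auto
qed

definition Inv1 :: "nat \<Rightarrow> state \<Rightarrow> bool" where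
  "Inv1 c st \<longleftrightarrow> (fst st \<subseteq> {0..<m} \<and> S \<subseteq> fst st \<and> (\<forall>j. snd st j \<subseteq> {0..<m})
     \<and> (\<forall>j. snd st j \<inter> fst st = {}) \<and> (\<forall>j j'. j \<noteq> j' \<longrightarrow> snd st j \<inter> snd st j' = {}) \<and> m \<le> card (fst st) + c)"

lemma step1:
  assumes inv: "Inv1 c (U, A)" and l: "l < n" and c: "c < n*n"
  shows "Inv1 (Suc c) (give_step ps (l, j) (U, A))"
proof -
  have U: "U \<subseteq> {0..<m}" "S \<subseteq> U" "\<forall>j. A j \<subseteq> {0..<m}" "\<forall>j. A j \<inter> U = {}"
    "\<forall>j j'. j \<noteq> j' \<longrightarrow> A j \<inter> A j' = {}" "m \<le> card U + c"
    using inv by (auto simp: Inv1_def)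
  have nR: "R \<le> n*R" using i by simp
  have cU: "R < card U" using U(6) c mbig nR by linarith
  have pl: "distinct (ps l)" "set (ps l) = {0..<m}" using perm[OF l] by auto
  then have Ui: "U \<inter> set (ps l) = U" using U(1) by auto
  have "U \<noteq> {}" using cU by auto
  with Ui obtain idx where h: "idx<length (ps l)" "ps l!idx = worst_in (ps l) U" "worst_in (ps l) U \<in> U"
    "length (ps l) \<le> Suc idx + card (set (ps l) - U)"
    "\<forall>b. idx < b \<and> b < length (ps l) \<longrightarrow> ps l!b \<notin> U"
    using worst_pos[OF pl(1), of U] by auto
  define g where "g = worst_in (ps l) U"
  have cd: "card (set (ps l) - U) = m - card U" using pl(2) U(1)
    by (simp add: card_Diff_subset finite_subset)
  have gS: "g \<notin> S"
  proof
    assume gS: "g \<in> S"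
    show False
    proof (cases "l = i")
      case True
      from gS obtain a where a: "a < R" "g = ps i ! a" using inS by auto
      have am: "a < m" using a mbig nR by linarith
      have "idx = a" using a h(1,2) True nth_eq_iff_index_eq[OF pl(1)] len[OF i] am g_def
        by auto
      have "U \<subseteq> S"
      proof
        fix x assume x: "x \<in> U"
        then obtain b where b: "b < m" "x = ps i ! b" using U(1) pl(2) True len[OF i]
          by (metis in_set_conv_nth subsetD)
        have "\<not> idx < b" using h(5) True b x len[OF i] by auto
        then have "b < R" using \<open>idx = a\<close> a by linarith
        then show "x \<in> S" using inS b by auto
      qed
      then have "card U \<le> R" using cardS by (metis card_mono finite_atLeastLessThan finite_subset S_sub)
      then show False using cU by simp
    next
      case False
      from gS obtain r where r: "r < R" "g = ps i ! r" using inS by auto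
      have "m - n*n \<le> idx" using h(4) cd U(6) c len[OF l] by linarith
      then have "drop (m - n*n) (ps l) ! (idx - (m - n*n)) = g" "idx - (m - n*n) < length (drop (m - n*n) (ps l))"
        using h(1,2) g_def len[OF l] by (auto simp: nth_drop)
      then have "g \<in> set (drop (m - n*n) (ps l))" by (metis nth_mem)
      moreover have "g < m" using h(3) U(1) g_def by auto
      ultimately have "g \<in> Dset n R m (ps l)" by (simp add: Dset_def)
      then show False using good[OF l False r(1)] r(2) by simp
    qed
  qed
  have gU: "g \<in> U" using h(3) g_def by simp
  have "card (U - {g}) = card U - 1" using gU by (simp add: card_Diff_singleton)
  have gs: "give_step ps (l,j) (U,A) = (U - {g}, A(j := insert g (A j)))"
    unfolding give_step_def Let_def g_def by simp
  have gA: "\<And>j. g \<notin> A j" using U(4) gU by blast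
  have d1: "\<forall>j' j''. j' \<noteq> j'' \<longrightarrow> (A(j := insert g (A j))) j' \<inter> (A(j := insert g (A j))) j'' = {}"
    using U(5) gA by (auto simp: fun_upd_def)
  have d2: "\<forall>j'. (A(j := insert g (A j))) j' \<inter> (U - {g}) = {}" using U(4) by (auto simp: fun_upd_def)
  have d3: "\<forall>j'. (A(j := insert g (A j))) j' \<subseteq> {0..<m}" using U(3) U(1) gU by (auto simp: fun_upd_def)
  have d4: "m \<le> card (U - {g}) + Suc c" using \<open>card (U - {g}) = card U - 1\<close> U(6) cU by linarith
  have d5: "S \<subseteq> U - {g}" using U(2) gS by blast
  have d6: "U - {g} \<subseteq> {0..<m}" using U(1) by blast
  show ?thesis unfolding gs Inv1_def fst_conv snd_conv using d1 d2 d3 d4 d5 d6 by (intro conjI)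
qed

lemma fold1:
  "Inv1 c st \<Longrightarrow> c + length xs \<le> n*n \<Longrightarrow> (\<forall>lj\<in>set xs. fst lj < n) \<Longrightarrow>
   Inv1 (c + length xs) (fold (give_step ps) xs st)"
proof (induction xs arbitrary: c st)
  case Nil then show ?case by simp
next
  case (Cons lj xs)
  obtain l j where lj: "lj = (l, j)" by (cases lj)
  obtain U A where st: "st = (U, A)" by (cases st)
  have "Inv1 (Suc c) (give_step ps (l, j) (U, A))"
    using Cons.prems lj st by (intro step1) auto
  then have "Inv1 (Suc c + length xs) (fold (give_step ps) xs (give_step ps (l,j) (U,A)))"
    using Cons.prems by (intro Cons.IH) auto
  then show ?case using lj st by simp
qed

lemma phase1_inv: "Inv1 (n*n) (phase1 n m ps)"
proof -
  let ?L = "[(i, j). i \<leftarrow> [0..<n], j \<leftarrow> [0..<n], j \<noteq> i]"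
  have "Inv1 0 ({0..<m}, (\<lambda>_. {}))" using S_sub by (simp add: Inv1_def)
  then have c: "Inv1 (0 + length ?L) (fold (give_step ps) ?L ({0..<m}, (\<lambda>_. {})))"
    using len_L1[of n] by (intro fold1) auto
  have mono: "\<And>c c' st. Inv1 c st \<Longrightarrow> c \<le> c' \<Longrightarrow> Inv1 c' st"
    unfolding Inv1_def by (elim conjE) (intro conjI; assumption?; linarith)
  have "Inv1 (n*n) (fold (give_step ps) ?L ({0..<m}, (\<lambda>_. {})))"
    by (rule mono[OF c]) (simp add: len_L1)
  then show ?thesis unfolding phase1_def .
qed

end


definition cnt :: "nat \<Rightarrow> nat \<Rightarrow> nat \<Rightarrow> nat" where
  "cnt n j t = length (filter (\<lambda>s. s mod n = j) [0..<t])"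

lemma cnt_Suc: "cnt n j (Suc t) = cnt n j t + (if t mod n = j then 1 else 0)"
  by (simp add: cnt_def)

lemma cnt_0[simp]: "cnt n j 0 = 0" by (simp add: cnt_def)

lemma cnt_mono: "cnt n j t \<le> cnt n j (t + d)"
  by (induction d) (auto simp: cnt_Suc)

lemma cnt_block: "j < n \<Longrightarrow> a \<le> n \<Longrightarrow> cnt n j (n*k + a) = k + (if j < a then 1 else 0)"
proof (induction k arbitrary: a)
  case 0
  then show ?case
  proof (induction a)
    case 0 then show ?case by simp
  next
    case (Suc a)
    then show ?case by (auto simp: cnt_Suc)
  qed
next
  case (Suc k)
  have base: "cnt n j (n * Suc k) = Suc k"
    using Suc.IH[of n] Suc.prems by (simp add: algebra_simps)
  show ?case using Suc.prems
  proof (induction a)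
    case 0 then show ?case using base by simp
  next
    case (Suc a)
    have "n + n*k + a = a + n * Suc k" by simp
    then have "(n + n*k + a) mod n = a" using Suc.prems by (simp only: mod_mult_self2) simp
    then show ?case using Suc by (auto simp: cnt_Suc)
  qed
qed

lemma cnt_ge: "j < n \<Longrightarrow> n*k \<le> t \<Longrightarrow> k \<le> cnt n j t"
  using cnt_block[of j n 0 k] cnt_mono[of n j "n*k" "t - n*k"] by simp

context det
begin

definition Inv2 :: "nat \<Rightarrow> nat \<Rightarrow> state \<Rightarrow> bool" where
  "Inv2 c t st \<longleftrightarrow> fst st \<subseteq> {0..<m} \<and> (\<forall>j. snd st j \<subseteq> {0..<m}) \<and> (\<forall>j. snd st j \<inter> fst st = {})
     \<and> (\<forall>j j'. j \<noteq> j' \<longrightarrow> snd st j \<inter> snd st j' = {}) \<and> card (fst st) + t = c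
     \<and> S \<subseteq> fst st \<union> snd st i \<and> (\<forall>l. l \<noteq> i \<longrightarrow> snd st l \<inter> S = {})
     \<and> min R (cnt n i t) \<le> card (S \<inter> snd st i) \<and> (\<forall>j. cnt n j t \<le> card (snd st j))"

lemma step2:
  assumes inv: "Inv2 c t (U, A)" and t: "t < c" and c: "m \<le> c + n*n"
  shows "Inv2 c (Suc t) (rr_step n ps t (U, A))"
proof -
  have U: "U \<subseteq> {0..<m}" "\<forall>j. A j \<subseteq> {0..<m}" "\<forall>j. A j \<inter> U = {}"
    "\<forall>j j'. j \<noteq> j' \<longrightarrow> A j \<inter> A j' = {}" "card U + t = c"
    "S \<subseteq> U \<union> A i" "\<forall>l. l \<noteq> i \<longrightarrow> A l \<inter> S = {}"
    "min R (cnt n i t) \<le> card (S \<inter> A i)" "\<forall>j. cnt n j t \<le> card (A j)"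
    using inv unfolding Inv2_def by auto
  define a where "a = t mod n"
  have n0: "0 < n" using i by simp
  have a: "a < n" using n0 a_def by simp
  have pa: "distinct (ps a)" "set (ps a) = {0..<m}" using perm[OF a] by auto
  have Ua: "U \<inter> set (ps a) = U" using U(1) pa(2) by auto
  have "U \<noteq> {}" using U(5) t by auto
  with Ua obtain idx where h: "idx<length (ps a)" "ps a!idx = best_in (ps a) U" "best_in (ps a) U \<in> U"
    "idx \<le> card (set (ps a) - U)" "\<forall>b<idx. ps a!b \<notin> U"
    using best_pos[OF pa(1), of U] by auto
  define g where "g = best_in (ps a) U"
  have gU: "g \<in> U" using h(3) g_def by simp
  have cd: "card (set (ps a) - U) = m - card U" using pa(2) U(1)
    by (simp add: card_Diff_subset finite_subset)
  have finS: "finite S" unfolding S_def by simp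
  have finA: "\<And>j. finite (A j)" using U(2) by (meson finite_atLeastLessThan finite_subset)
  have gA: "\<And>j. g \<notin> A j" using U(3) gU by blast
  have gS: "a \<noteq> i \<Longrightarrow> g \<notin> S"
  proof
    assume ai: "a \<noteq> i" and gS: "g \<in> S"
    show False
    proof (cases "t < n*R")
      case True
      have "idx < n*n + n*R" using h(4) cd U(5) c True by linarith
      then have "take (n*n + n*R) (ps a) ! idx = g" "idx < length (take (n*n + n*R) (ps a))"
        using h(1,2) g_def by auto
      then have "g \<in> set (take (n*n + n*R) (ps a))" by (metis nth_mem)
      moreover have "g < m" using gU U(1) by auto
      ultimately have "g \<in> Dset n R m (ps a)" by (simp add: Dset_def)
      moreover from gS obtain r where "r < R" "g = ps i ! r" using inS by auto
      ultimately show False using good[OF a ai] by auto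
    next
      case False
      have "R \<le> cnt n i t" using cnt_ge[OF i, of R t] False by simp
      then have "R \<le> card (S \<inter> A i)" using U(8) by simp
      then have "S \<inter> A i = S" using card_seteq[OF finS Int_lower1, of "A i"] cardS by simp
      then show False using gS gA by blast
    qed
  qed
  have rs: "rr_step n ps t (U, A) = (U - {g}, A(a := insert g (A a)))"
    unfolding rr_step_def Let_def g_def a_def by simp
  have cU: "card (U - {g}) = card U - 1" using gU by (simp add: card_Diff_singleton)
  have cntS: "\<And>j. cnt n j (Suc t) = cnt n j t + (if a = j then 1 else 0)"
    using cnt_Suc a_def by simp
  have d1: "\<forall>j j'. j \<noteq> j' \<longrightarrow> (A(a := insert g (A a))) j \<inter> (A(a := insert g (A a))) j' = {}"
    using U(4) gA by (auto simp: fun_upd_def)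
  have d2: "\<forall>j. (A(a := insert g (A a))) j \<inter> (U - {g}) = {}" using U(3) by (auto simp: fun_upd_def)
  have d3: "\<forall>j. (A(a := insert g (A a))) j \<subseteq> {0..<m}" using U(2) U(1) gU by (auto simp: fun_upd_def)
  have "finite U" using U(1) finite_subset by blast
  then have "card U > 0" using gU card_gt_0_iff by blast
  then have d4: "card (U - {g}) + Suc t = c" using cU U(5) by linarith
  have d5: "U - {g} \<subseteq> {0..<m}" using U(1) by blast
  have d6: "S \<subseteq> (U - {g}) \<union> (A(a := insert g (A a))) i"
    using U(6) gS by (auto simp: fun_upd_def)
  have d7: "\<forall>l. l \<noteq> i \<longrightarrow> (A(a := insert g (A a))) l \<inter> S = {}"
    using U(7) gS by (auto simp: fun_upd_def)
  have d8: "\<forall>j. cnt n j (Suc t) \<le> card ((A(a := insert g (A a))) j)"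
  proof
    fix j show "cnt n j (Suc t) \<le> card ((A(a := insert g (A a))) j)"
    proof (cases "a = j")
      case True
      then have "card ((A(a := insert g (A a))) j) = card (A j) + 1"
        using gA finA by simp
      then show ?thesis using cntS U(9) True by simp
    next
      case False
      then show ?thesis using cntS U(9) by simp
    qed
  qed
  have d9: "min R (cnt n i (Suc t)) \<le> card (S \<inter> (A(a := insert g (A a))) i)"
  proof (cases "a = i")
    case False
    then show ?thesis using cntS U(8) by simp
  next
    case True
    have Ai: "(A(a := insert g (A a))) i = insert g (A i)" using True by simp
    have mono: "card (S \<inter> A i) \<le> card (S \<inter> insert g (A i))"
      using finS by (intro card_mono) auto
    show ?thesis
    proof (cases "R \<le> card (S \<inter> A i)")
      case True
      then show ?thesis using Ai mono by simp
    next
      case False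
      then have "S \<inter> A i \<noteq> S" using cardS by auto
      then obtain x where x: "x \<in> S" "x \<notin> A i" by blast
      then have xU: "x \<in> U" using U(6) by blast
      from x obtain r where r: "r < R" "x = ps i ! r" using inS by auto
      have "\<not> r < idx" using h(5) xU r True by auto
      then have "idx < R" using r by linarith
      then have "g \<in> S" using inS h(2) g_def True by auto
      then have "S \<inter> insert g (A i) = insert g (S \<inter> A i)" by blast
      then have "card (S \<inter> insert g (A i)) = card (S \<inter> A i) + 1"
        using gA finS by simp
      moreover have "cnt n i t \<le> card (S \<inter> A i)" using False U(8) by simp
      ultimately show ?thesis using Ai cntS True by simp
    qed
  qed
  show ?thesis unfolding rs Inv2_def fst_conv snd_conv
    using d1 d2 d3 d4 d5 d6 d7 d8 d9 by (intro conjI)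
qed

lemma fold2:
  assumes inv0: "Inv2 c 0 st" and c: "m \<le> c + n*n"
  shows "t \<le> c \<Longrightarrow> Inv2 c t (fold (rr_step n ps) [0..<t] st)"
proof (induction t)
  case 0 then show ?case using inv0 by simp
next
  case (Suc t)
  then have IH: "Inv2 c t (fold (rr_step n ps) [0..<t] st)" by simp
  obtain U A where st: "fold (rr_step n ps) [0..<t] st = (U, A)" by (cases "fold (rr_step n ps) [0..<t] st")
  have "Inv2 c (Suc t) (rr_step n ps t (U, A))"
    using IH st Suc.prems c by (intro step2) auto
  then show ?case using st by simp
qed

lemma inv12:
  assumes "Inv1 k st" shows "Inv2 (card (fst st)) 0 st"
proof -
  have h: "fst st \<subseteq> {0..<m}" "S \<subseteq> fst st" "\<forall>j. snd st j \<subseteq> {0..<m}"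
    "\<forall>j. snd st j \<inter> fst st = {}" "\<forall>j j'. j \<noteq> j' \<longrightarrow> snd st j \<inter> snd st j' = {}"
    using assms unfolding Inv1_def by auto
  have "\<forall>l. l \<noteq> i \<longrightarrow> snd st l \<inter> S = {}" using h(2,4) by blast
  moreover have "S \<subseteq> fst st \<union> snd st i" using h(2) by blast
  ultimately show ?thesis unfolding Inv2_def using h by simp
qed

lemma inv1m: "Inv1 k st \<Longrightarrow> m \<le> card (fst st) + k"
  unfolding Inv1_def by blast

lemma final_inv:
  shows "Inv2 (card (fst (phase1 n m ps))) (card (fst (phase1 n m ps))) (phase2 n ps (phase1 n m ps))"
    and "m \<le> card (fst (phase1 n m ps)) + n*n"
proof -
  obtain st where st: "st = phase1 n m ps" by simp
  have I1: "Inv1 (n*n) st" unfolding st by (rule phase1_inv)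
  have c: "m \<le> card (fst st) + n*n" by (rule inv1m[OF I1])
  have "Inv2 (card (fst st)) (card (fst st)) (fold (rr_step n ps) [0..<card (fst st)] st)"
    by (rule fold2[OF inv12[OF I1] c]) simp
  then show "Inv2 (card (fst (phase1 n m ps))) (card (fst (phase1 n m ps))) (phase2 n ps (phase1 n m ps))"
    unfolding phase2_def st .
  show "m \<le> card (fst (phase1 n m ps)) + n*n" using c st by simp
qed

end


context det
begin

lemma no_event:
  assumes k: "1 \<le> k" "k \<le> R" and j: "j < n" "j \<noteq> i"
  shows "\<not> event_E n m ps i j k"
proof
  assume ev: "event_E n m ps i j k"
  define c where "c = card (fst (phase1 n m ps))"
  define st where "st = phase1 n m ps"
  have I: "Inv2 c c (phase2 n ps st)" and cm: "m \<le> c + n*n"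
    using final_inv unfolding c_def st_def by auto
  define A where "A = garr n m ps"
  have A: "A = snd (phase2 n ps st)" unfolding A_def garr_def st_def by simp
  have H: "\<forall>j. A j \<subseteq> {0..<m}" "\<forall>j j'. j \<noteq> j' \<longrightarrow> A j \<inter> A j' = {}"
    "min R (cnt n i c) \<le> card (S \<inter> A i)" "\<forall>j. cnt n j c \<le> card (A j)"
    using I unfolding Inv2_def A by auto
  have nR: "n*R \<le> c" using cm mbig by linarith
  have cj: "R \<le> card (A j)" using cnt_ge[OF j(1) nR] H(4) by (meson le_trans)
  have ci: "R \<le> card (S \<inter> A i)" using cnt_ge[OF i nR] H(3) by simp
  have finS: "finite S" unfolding S_def by simp
  have "S \<inter> A i = S" using card_seteq[OF finS Int_lower1, of "A i"] cardS ci by simp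
  then have SA: "S \<subseteq> A i" by blast
  have pi: "distinct (ps i)" "set (ps i) = {0..<m}" using perm[OF i] by auto
  define fj where "fj = filter (\<lambda>g. g \<in> A j) (ps i)"
  have "length fj = card ({g. g \<in> A j} \<inter> set (ps i))"
    unfolding fj_def by (rule distinct_length_filter[OF pi(1)])
  also have "{g. g \<in> A j} \<inter> set (ps i) = A j" using H(1) pi(2) by auto
  finally have "k - 1 < length fj" using cj k by linarith
  then have bj: "kth_best n m ps i j k \<in> A j"
    unfolding kth_best_def A_def[symmetric] fj_def[symmetric]
    using nth_mem[of "k-1" fj] unfolding fj_def by auto
  have li: "length (ps i) = m" using len[OF i] .
  have "filter (\<lambda>g. g \<in> A i) (take R (ps i)) = take R (ps i)"
    using SA unfolding S_def by (auto simp: filter_id_conv)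
  then have fi: "filter (\<lambda>g. g \<in> A i) (ps i) = take R (ps i) @ filter (\<lambda>g. g \<in> A i) (drop R (ps i))"
    by (metis append_take_drop_id filter_append)
  have lt: "length (take R (ps i)) = R" using li Rm by simp
  have bi: "kth_best n m ps i i k = ps i ! (k - 1)"
  proof -
    have kR: "k - 1 < R" using k by linarith
    have "(take R (ps i) @ filter (\<lambda>g. g \<in> A i) (drop R (ps i))) ! (k - 1) = take R (ps i) ! (k - 1)"
      using kR lt by (simp add: nth_append)
    also have "\<dots> = ps i ! (k - 1)" using kR by simp
    finally show ?thesis unfolding kth_best_def A_def[symmetric] fi .
  qed
  from ev obtain a b where ab: "a < b" "b < length (ps i)" "ps i ! a = kth_best n m ps i j k"
    "ps i ! b = ps i ! (k - 1)"
    unfolding event_E_def ranked_above_def bi by blast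
  have "b = k - 1" using ab(2,4) nth_eq_iff_index_eq[OF pi(1)] k li Rm by auto
  then have "a < R" using ab(1) k by linarith
  then have "kth_best n m ps i j k \<in> S" using inS ab(3) by auto
  then show False using bj SA H(2) j(2) by blast
qed

end


lemma nth_uniform:
  fixes r m x :: nat
  assumes r: "r < m" and x: "x < m"
  shows "measure_pmf.prob (pmf_of_set (permutations_of_set {0..<m})) {p. p ! r = x} = 1 / real m"
proof -
  define P where "P = permutations_of_set {0..<(m::nat)}"
  define N where "N y = card (P \<inter> {p. p ! r = y})" for y
  have finP: "finite P" unfolding P_def by simp
  have neP: "P \<noteq> {}" unfolding P_def by simp
  have lenP: "\<And>p. p \<in> P \<Longrightarrow> length p = m"
  proof -
    fix p assume "p \<in> P"
    then have "set p = {0..<m}" "distinct p" unfolding P_def by (auto dest: permutations_of_setD)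
    then have "card (set p) = length p" using distinct_card by blast
    then show "length p = m" using \<open>set p = {0..<m}\<close> by simp
  qed
  have eq: "N y = N x" if y: "y < m" for y
  proof -
    define \<tau> where "\<tau> z = (if z = x then y else if z = y then x else z)" for z
    have tt: "\<tau> (\<tau> z) = z" for z unfolding \<tau>_def by auto
    have tm: "\<tau> z < m" if "z < m" for z unfolding \<tau>_def using that x y by auto
    have img: "\<tau> ` {0..<m} = {0..<m}"
    proof
      show "\<tau> ` {0..<m} \<subseteq> {0..<m}" using tm by auto
      show "{0..<m} \<subseteq> \<tau> ` {0..<m}"
      proof
        fix z assume "z \<in> {0..<m}"
        then have "\<tau> z \<in> {0..<m}" "\<tau> (\<tau> z) = z" using tm tt by auto
        then show "z \<in> \<tau> ` {0..<m}" by (metis imageI)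
      qed
    qed
    have injt: "inj \<tau>" by (metis injI tt)
    have mapP: "map \<tau> p \<in> P" if "p \<in> P" for p
    proof -
      have "set p = {0..<m}" "distinct p" using that unfolding P_def by (auto dest: permutations_of_setD)
      then have "set (map \<tau> p) = {0..<m}" "distinct (map \<tau> p)"
        using img injt by (auto simp: distinct_map inj_on_def)
      then show ?thesis unfolding P_def by auto
    qed
    have nthm: "map \<tau> p ! r = \<tau> (p ! r)" if "p \<in> P" for p using lenP[OF that] r by simp
    have mm: "map \<tau> (map \<tau> p) = p" for p by (simp add: tt comp_def)
    have "bij_betw (map \<tau>) (P \<inter> {p. p ! r = x}) (P \<inter> {p. p ! r = y})"
    proof (rule bij_betw_byWitness[where f' = "map \<tau>"])
      show "\<forall>a\<in>P \<inter> {p. p ! r = x}. map \<tau> (map \<tau> a) = a" using mm by simp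
      show "\<forall>a\<in>P \<inter> {p. p ! r = y}. map \<tau> (map \<tau> a) = a" using mm by simp
      show "map \<tau> ` (P \<inter> {p. p ! r = x}) \<subseteq> P \<inter> {p. p ! r = y}"
        using mapP nthm unfolding \<tau>_def by auto
      show "map \<tau> ` (P \<inter> {p. p ! r = y}) \<subseteq> P \<inter> {p. p ! r = x}"
        using mapP nthm unfolding \<tau>_def by auto
    qed
    then show ?thesis unfolding N_def by (metis bij_betw_same_card)
  qed
  have "P = (\<Union>y\<in>{..<m}. P \<inter> {p. p ! r = y})"
  proof
    show "P \<subseteq> (\<Union>y\<in>{..<m}. P \<inter> {p. p ! r = y})"
    proof
      fix p assume p: "p \<in> P"
      then have "set p = {0..<m}" unfolding P_def by (auto dest: permutations_of_setD)
      moreover have "p ! r \<in> set p" using lenP[OF p] r by simp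
      ultimately have "p ! r < m" by simp
      then show "p \<in> (\<Union>y\<in>{..<m}. P \<inter> {p. p ! r = y})" using p by auto
    qed
  qed auto
  moreover have "card (\<Union>y\<in>{..<m}. P \<inter> {p. p ! r = y}) = (\<Sum>y\<in>{..<m}. card (P \<inter> {p. p ! r = y}))"
    by (rule card_UN_disjoint) (use finP in auto)
  ultimately have "card P = (\<Sum>y\<in>{..<m}. N y)"
    unfolding N_def by simp
  also have "\<dots> = m * N x" using eq by simp
  finally have cP: "card P = m * N x" .
  have "measure_pmf.prob (pmf_of_set P) {p. p ! r = x} = N x / card P"
    unfolding N_def using finP neP by (simp add: measure_pmf_of_set)
  also have "\<dots> = 1 / real m" using cP neP finP r by (auto simp: field_simps)
  finally show ?thesis unfolding P_def .
qed



lemma sum_D: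
  fixes P :: "nat list set" and D :: "nat list \<Rightarrow> nat set" and m K :: nat
  assumes finP: "finite P" and Dm: "\<And>p. D p \<subseteq> {..<m}" and DK: "\<And>p. p \<in> P \<Longrightarrow> card (D p) \<le> K"
  shows "(\<Sum>x<m. card (P \<inter> {p. x \<in> D p})) \<le> card P * K"
proof -
  have "(\<Sum>x<m. card (P \<inter> {p. x \<in> D p})) = (\<Sum>x<m. \<Sum>p\<in>P. if x \<in> D p then 1 else 0)"
  proof (rule sum.cong[OF refl])
    fix x
    have "card (P \<inter> {p. x \<in> D p}) = (\<Sum>p\<in>P \<inter> {p. x \<in> D p}. 1)" by simp
    also have "\<dots> = (\<Sum>p\<in>P. if x \<in> D p then 1 else 0)"
      using finP by (simp add: sum.If_cases)
    finally show "card (P \<inter> {p. x \<in> D p}) = (\<Sum>p\<in>P. if x \<in> D p then 1 else 0)" .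
  qed
  also have "\<dots> = (\<Sum>p\<in>P. \<Sum>x<m. if x \<in> D p then 1 else 0)" by (rule sum.swap)
  also have "\<dots> = (\<Sum>p\<in>P. card (D p))"
  proof (rule sum.cong[OF refl])
    fix p
    have "(\<Sum>x<m. if x \<in> D p then 1 else 0) = (\<Sum>x\<in>{..<m} \<inter> {x. x \<in> D p}. (1::nat))"
      by (simp add: sum.If_cases)
    also have "{..<m} \<inter> {x. x \<in> D p} = D p" using Dm[of p] by auto
    finally show "(\<Sum>x<m. if x \<in> D p then 1 else 0) = card (D p)" by simp
  qed
  also have "\<dots> \<le> (\<Sum>p\<in>P. K)" by (intro sum_mono DK)
  finally show ?thesis by simp
qed

lemma PiE_dflt_undefined: "PiE_dflt A undefined B = PiE A B"
  by (auto simp: PiE_dflt_def PiE_def extensional_def Pi_def)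

lemma orderings_Pi: "orderings_pmf n m = Pi_pmf {0..<n} undefined (\<lambda>_. pmf_of_set (permutations_of_set {0..<m}))"
  unfolding orderings_pmf_def orderings_def
  by (subst Pi_pmf_of_set) (auto simp: PiE_dflt_undefined)

lemma probG:
  fixes n m i l r K :: nat and D :: "nat list \<Rightarrow> nat set"
  assumes i: "i < n" and l: "l < n" "l \<noteq> i" and r: "r < m"
    and Dm: "\<And>p. D p \<subseteq> {..<m}"
    and DK: "\<And>p. p \<in> permutations_of_set {0..<m} \<Longrightarrow> card (D p) \<le> K"
  shows "measure_pmf.prob (orderings_pmf n m) {ps. ps i ! r \<in> D (ps l)} \<le> K / m"
proof -
  define P where "P = permutations_of_set {0..<m}"
  define Q where "Q = pmf_of_set P"
  define A where "A = {0..<n}"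
  define B where "B x a = (if a = i then {p. p ! r = x} else if a = l then {p. x \<in> D p} else UNIV)" for x a
  have finP: "finite P" and neP: "P \<noteq> {}" unfolding P_def by auto
  have M: "orderings_pmf n m = Pi_pmf A undefined (\<lambda>_. Q)"
    unfolding orderings_Pi A_def Q_def P_def ..
  have sub: "{ps. ps i ! r \<in> D (ps l)} \<subseteq> (\<Union>x\<in>{..<m}. Pi A (B x))"
  proof
    fix ps assume "ps \<in> {ps. ps i ! r \<in> D (ps l)}"
    then have h: "ps i ! r \<in> D (ps l)" by simp
    then have "ps i ! r < m" using Dm by blast
    moreover have "ps \<in> Pi A (B (ps i ! r))" using h l unfolding B_def Pi_def by auto
    ultimately show "ps \<in> (\<Union>x\<in>{..<m}. Pi A (B x))" by blast
  qed
  have pF: "measure_pmf.prob (orderings_pmf n m) (Pi A (B x)) = (1 / m) * (card (P \<inter> {p. x \<in> D p}) / card P)"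
    if x: "x < m" for x
  proof -
    have "measure_pmf.prob (orderings_pmf n m) (Pi A (B x)) = (\<Prod>a\<in>A. measure_pmf.prob Q (B x a))"
      unfolding M by (rule measure_Pi_pmf_Pi) (simp add: A_def)
    also have "\<dots> = measure_pmf.prob Q (B x i) * (\<Prod>a\<in>A - {i}. measure_pmf.prob Q (B x a))"
      using i by (subst prod.remove[of A i]) (auto simp: A_def)
    also have "(\<Prod>a\<in>A - {i}. measure_pmf.prob Q (B x a)) =
        measure_pmf.prob Q (B x l) * (\<Prod>a\<in>A - {i} - {l}. measure_pmf.prob Q (B x a))"
      using l by (subst prod.remove[of "A - {i}" l]) (auto simp: A_def)
    also have "(\<Prod>a\<in>A - {i} - {l}. measure_pmf.prob Q (B x a)) = 1"
      by (rule prod.neutral) (auto simp: B_def)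
    also have "measure_pmf.prob Q (B x i) = 1 / m"
      unfolding B_def Q_def P_def using nth_uniform[OF r x] by simp
    also have "measure_pmf.prob Q (B x l) = card (P \<inter> {p. x \<in> D p}) / card P"
      unfolding B_def Q_def using l finP neP by (simp add: measure_pmf_of_set)
    finally show ?thesis by simp
  qed
  have sD: "(\<Sum>x<m. card (P \<inter> {p. x \<in> D p})) \<le> card P * K"
    by (rule sum_D[OF finP Dm]) (use DK in \<open>auto simp: P_def\<close>)
  have "measure_pmf.prob (orderings_pmf n m) {ps. ps i ! r \<in> D (ps l)}
      \<le> measure_pmf.prob (orderings_pmf n m) (\<Union>x\<in>{..<m}. Pi A (B x))"
    by (rule measure_pmf.finite_measure_mono[OF sub]) simp
  also have "\<dots> \<le> (\<Sum>x<m. measure_pmf.prob (orderings_pmf n m) (Pi A (B x)))"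
    by (rule measure_pmf.finite_measure_subadditive_finite) auto
  also have "\<dots> = (\<Sum>x<m. (1 / m) * (card (P \<inter> {p. x \<in> D p}) / card P))"
    using pF by simp
  also have "\<dots> = (1 / m) / card P * real (\<Sum>x<m. card (P \<inter> {p. x \<in> D p}))"
    by (simp add: sum_distrib_left)
  also have "\<dots> \<le> (1 / m) / card P * real (card P * K)"
    by (intro mult_left_mono of_nat_mono[OF sD]) simp
  also have "\<dots> = K / m" using finP neP by (simp add: field_simps)
  finally show ?thesis .
qed



lemma card_Dset:
  assumes "length p = m"
  shows "card (Dset n R m p) \<le> n*n + n*R + n*n"
proof -
  have "card (Dset n R m p) \<le> card (set (take (n*n + n*R) p) \<union> set (drop (m - n*n) p))"
    unfolding Dset_def by (intro card_mono) auto
  also have "\<dots> \<le> card (set (take (n*n + n*R) p)) + card (set (drop (m - n*n) p))"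
    by (rule card_Un_le)
  also have "card (set (take (n*n + n*R) p)) \<le> n*n + n*R"
    using card_length[of "take (n*n + n*R) p"] by simp
  also have "card (set (drop (m - n*n) p)) \<le> n*n"
    using card_length[of "drop (m - n*n) p"] assms by simp
  finally show ?thesis by simp
qed

lemma perm_len: "p \<in> permutations_of_set {0..<m} \<Longrightarrow> length p = m"
proof -
  assume "p \<in> permutations_of_set {0..<m}"
  then have "set p = {0..<m}" "distinct p" by (auto dest: permutations_of_setD)
  then have a: "card (set p) = length p" using distinct_card by blast
  have b: "card (set p) = m" using \<open>set p = {0..<m}\<close> by simp
  show ?thesis using a b by simp
qed

theorem lemma4p11:
  fixes n q m i :: nat
  assumes "n \<ge> 2" and "q > 0" and "m = q * n"
    and "real m \<ge> 67584 * real n ^ 3 * (ln (real m))\<^sup>2 + 25216 * real n ^ 4 * ln (real m)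
                  + 2354 * real n ^ 5 + 128 * real n ^ 2 * ln (real m)
                  + 24 * real n ^ 3 + 3 * real n ^ 2 + real n"
    and "i < n"
  shows "measure_pmf.prob (orderings_pmf n m)
           {ps. \<exists>k j. 1 \<le> k \<and> k \<le> q \<and> real k < 32 * ln (real m) + 4 * real n
                     \<and> j < n \<and> j \<noteq> i \<and> event_E n m ps i j k}
         \<le> (2048 * real n ^ 2 * (ln (real m))\<^sup>2 + 640 * real n ^ 3 * ln (real m)
             + 50 * real n ^ 4) / real m"
proof -
  define L where "L = ln (real m)"
  define K where "K = 32 * L + 4 * real n"
  define R where "R = nat \<lfloor>K\<rfloor>"
  define T where "T = n*n + n*R + n*n"
  define Bad where "Bad = {ps. \<exists>k j. 1 \<le> k \<and> k \<le> q \<and> real k < 32 * ln (real m) + 4 * real n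
                     \<and> j < n \<and> j \<noteq> i \<and> event_E n m ps i j k}"
  define Ls where "Ls = {0..<n} - {i}"
  define G where "G lr = {ps. ps i ! snd lr \<in> Dset n R m (ps (fst lr))}" for lr :: "nat \<times> nat"
  have n2: "n \<ge> 2" and i: "i < n" using assms by auto
  have "1 * n \<le> q * n" using assms(2) by (intro mult_right_mono) auto
  then have m2: "m \<ge> 2" using assms(3) n2 by linarith
  have L0: "L \<ge> 0" unfolding L_def using m2 by simp
  have K0: "K \<ge> 0" unfolding K_def using L0 by simp
  have RK: "real R \<le> K" unfolding R_def using K0 by simp
  have rn: "real n \<ge> 2" using n2 by simp
  have mbig: "n*n + n*R \<le> m"
  proof -
    have h1: "32 * (real n * L) \<le> 128 * (real n ^ 2 * L)"
    proof -
      have "real n \<le> real n ^ 2" using rn by (simp add: power2_eq_square)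
      then have "real n * L \<le> real n ^ 2 * L" using L0 by (intro mult_right_mono) auto
      moreover have "0 \<le> real n * L" using L0 by simp
      ultimately show ?thesis by linarith
    qed
    have h2: "4 * real n ^ 2 \<le> 24 * real n ^ 3"
    proof -
      have "real n ^ 2 * 1 \<le> real n ^ 2 * real n" using rn by (intro mult_left_mono) auto
      then have "real n ^ 2 \<le> real n ^ 3" by (simp add: power2_eq_square power3_eq_cube)
      moreover have "0 \<le> real n ^ 3" by simp
      ultimately show ?thesis by linarith
    qed
    have h3: "real n * real R \<le> real n * K" using RK by (intro mult_left_mono) auto
    have h3': "real n * K = 32 * (real n * L) + 4 * real n ^ 2"
      unfolding K_def by (simp add: algebra_simps power2_eq_square)
    have h4: "0 \<le> 67584 * (real n ^ 3 * L\<^sup>2) + 25216 * (real n ^ 4 * L) + 2354 * real n ^ 5 + real n"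
      using L0 by simp
    have A4: "67584 * (real n ^ 3 * L\<^sup>2) + 25216 * (real n ^ 4 * L) + 2354 * real n ^ 5
       + 128 * (real n ^ 2 * L) + 24 * real n ^ 3 + 3 * real n ^ 2 + real n \<le> real m"
      using assms(4) unfolding L_def by (simp only: mult.assoc)
    have h5: "0 \<le> real n ^ 2" by simp
    have "real (n*n + n*R) = real n ^ 2 + real n * real R" by (simp add: power2_eq_square)
    also have "\<dots> \<le> real m" using h1 h2 h3 h3' h4 h5 A4 by linarith
    finally show ?thesis by (simp only: of_nat_le_iff)
  qed
  have Rm: "R \<le> m"
  proof -
    have "R \<le> n*R" using n2 by simp
    then show ?thesis using mbig by linarith
  qed
  have finO: "finite (orderings n m)" unfolding orderings_def by (intro finite_PiE) auto
  have neO: "orderings n m \<noteq> {}" unfolding orderings_def by (simp add: PiE_eq_empty_iff)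
  have setO: "set_pmf (orderings_pmf n m) = orderings n m"
    unfolding orderings_pmf_def using finO neO by simp
  have sub: "Bad \<inter> orderings n m \<subseteq> (\<Union>lr\<in>Ls \<times> {..<R}. G lr)"
  proof
    fix ps assume ps: "ps \<in> Bad \<inter> orderings n m"
    show "ps \<in> (\<Union>lr\<in>Ls \<times> {..<R}. G lr)"
    proof (rule ccontr)
      assume nU: "ps \<notin> (\<Union>lr\<in>Ls \<times> {..<R}. G lr)"
      have det: "det n m i R ps"
      proof
        fix l assume l: "l < n"
        then have "ps l \<in> permutations_of_set {0..<m}" using ps unfolding orderings_def by auto
        then show "distinct (ps l) \<and> set (ps l) = {0..<m}" by (auto dest: permutations_of_setD)
      next
        show "i < n" by (rule i)
        show "n*n + n*R \<le> m" by (rule mbig)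
      next
        fix l r assume "l < n" "l \<noteq> i" "r < R"
        then have "(l, r) \<in> Ls \<times> {..<R}" unfolding Ls_def by auto
        then show "ps i ! r \<notin> Dset n R m (ps l)" using nU unfolding G_def by auto
      qed
      from ps obtain k j where kj: "1 \<le> k" "real k < 32 * ln (real m) + 4 * real n"
        "j < n" "j \<noteq> i" "event_E n m ps i j k" unfolding Bad_def by auto
      have "real k < K" using kj(2) unfolding K_def L_def .
      then have "int k \<le> \<lfloor>K\<rfloor>" by linarith
      then have "k \<le> R" unfolding R_def by linarith
      then show False using det.no_event[OF det kj(1) _ kj(3,4)] kj(5) by simp
    qed
  qed
  have pG: "measure_pmf.prob (orderings_pmf n m) (G lr) \<le> real T / real m" if lr: "lr \<in> Ls \<times> {..<R}" for lr
  proof -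
    obtain l r where lr': "lr = (l, r)" by (cases lr)
    have l: "l < n" "l \<noteq> i" and r: "r < R" using lr lr' unfolding Ls_def by auto
    have "measure_pmf.prob (orderings_pmf n m) {ps. ps i ! r \<in> Dset n R m (ps l)} \<le> real T / real m"
    proof (rule probG[OF i l])
      show "r < m" using r Rm by simp
      show "\<And>p. Dset n R m p \<subseteq> {..<m}" by (auto simp: Dset_def)
      show "\<And>p. p \<in> permutations_of_set {0..<m} \<Longrightarrow> card (Dset n R m p) \<le> T"
        unfolding T_def by (rule card_Dset[OF perm_len])
    qed
    then show ?thesis unfolding G_def lr' by simp
  qed
  have "measure_pmf.prob (orderings_pmf n m) Bad = measure_pmf.prob (orderings_pmf n m) (Bad \<inter> orderings n m)"
    using measure_Int_set_pmf[of "orderings_pmf n m" Bad] setO by simp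
  also have "\<dots> \<le> measure_pmf.prob (orderings_pmf n m) (\<Union>lr\<in>Ls \<times> {..<R}. G lr)"
    by (rule measure_pmf.finite_measure_mono[OF sub]) simp
  also have "\<dots> \<le> (\<Sum>lr\<in>Ls \<times> {..<R}. measure_pmf.prob (orderings_pmf n m) (G lr))"
    by (rule measure_pmf.finite_measure_subadditive_finite) (auto simp: Ls_def)
  also have "\<dots> \<le> (\<Sum>lr\<in>Ls \<times> {..<R}. real T / real m)"
    by (rule sum_mono) (rule pG)
  also have "\<dots> = real (n - 1) * real R * real T / real m"
    using i by (simp add: Ls_def card_cartesian_product)
  also have "\<dots> \<le> (2048 * real n ^ 2 * (ln (real m))\<^sup>2 + 640 * real n ^ 3 * ln (real m)
             + 50 * real n ^ 4) / real m"
  proof -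
    have mpos: "real m > 0" using m2 by simp
    have Treal: "real T = 2 * real n ^ 2 + real n * real R" unfolding T_def by (simp add: power2_eq_square)
    have a: "real R * (2 * real n ^ 2 + real n * real R) \<le> K * (2 * real n ^ 2 + real n * K)"
      using RK K0 by (intro mult_mono add_left_mono mult_left_mono) auto
    have b: "real (n - 1) * (real R * (2 * real n ^ 2 + real n * real R)) \<le> real n * (K * (2 * real n ^ 2 + real n * K))"
      by (rule mult_mono) (use a n2 K0 in auto)
    have c: "real n * (K * (2 * real n ^ 2 + real n * K)) = 1024 * (real n ^ 2 * L^2) + 320 * (real n ^ 3 * L) + 24 * real n ^ 4"
      unfolding K_def by (simp add: algebra_simps power2_eq_square eval_nat_numeral)
    have d: "0 \<le> real n ^ 2 * L^2" "0 \<le> real n ^ 3 * L" "0 \<le> real n ^ 4" using L0 by auto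
    have e: "real (n - 1) * real R * real T = real (n - 1) * (real R * (2 * real n ^ 2 + real n * real R))"
      unfolding Treal by (simp only: mult.assoc)
    have "real (n - 1) * real R * real T \<le> 2048 * (real n ^ 2 * L^2) + 640 * (real n ^ 3 * L) + 50 * real n ^ 4"
      unfolding e using b c d by linarith
    then have "real (n - 1) * real R * real T \<le> 2048 * real n ^ 2 * (ln (real m))\<^sup>2 + 640 * real n ^ 3 * ln (real m)
             + 50 * real n ^ 4"
      unfolding L_def by (simp only: mult.assoc)
    then show ?thesis using mpos by (intro divide_right_mono) auto
  qed
  finally show ?thesis unfolding Bad_def .
qed


end
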